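(* Let $m=2k$ with $k$ a positive integer, let $n$ be a positive integer, and let $\{B_1,\dots,B_{k(n-1)+1}\}$ be a basis for $\Gamma_{k,n}$. For each $i$, let $\hat B_i$ be the $m\times n$ matrix $\begin{pmatrix} B_i\\ B_i^\pi\end{pmatrix}$ (the $k\times n$ block $B_i$ stacked on top of the $k\times n$ block $B_i^\pi$). Then $\{\hat B_1,\dots,\hat B_{k(n-1)+1}\}$ is a basis for $\Gamma^\pi_{m,n}$.
   Context: A real matrix is stochastic if its entries are nonnegative and each row sums to $1$. $\Gamma_{k,n}$ is the set of $k\times n$ stochastic matrices. For $A=(a_{i,j})\in M_{p,n}$, $A^\pi$ is the $p\times n$ matrix with $(A^\pi)_{i,j}=a_{p+1-i,n+1-j}$; $A$ is centrosymmetric if $A=A^\pi$. $\Gamma^\pi_{m,n}$ is the set of $m\times n$ centrosymmetric stochastic matrices; it is an affine set of dimension $k(n-1)$. A basis for such a set $\Gamma$ of affine dimension $d$ means a set of $d+1$ linearly independent elements of $\Gamma$ whose linear span contains $\Gamma$. *)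

theory Defs
  imports Complex_Main
begin

text \<open>A p x n real matrix is represented as a function nat => nat => real;
  only the entries with row index < p and column index < n (0-based) matter.\<close>

type_synonym mat = "nat \<Rightarrow> nat \<Rightarrow> real"

definition stochastic :: "nat \<Rightarrow> nat \<Rightarrow> mat \<Rightarrow> bool" where
  "stochastic p n A \<longleftrightarrow>
     (\<forall>i<p. \<forall>j<n. 0 \<le> A i j) \<and> (\<forall>i<p. (\<Sum>j<n. A i j) = 1)"

definition Gamma :: "nat \<Rightarrow> nat \<Rightarrow> mat set" where
  "Gamma p n = {A. stochastic p n A}"

text \<open>A^pi with (A^pi)_{i,j} = a_{p+1-i,n+1-j} (1-based), i.e. a_{p-1-i,n-1-j} 0-based.\<close>
definition pi_mat :: "nat \<Rightarrow> nat \<Rightarrow> mat \<Rightarrow> mat" where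
  "pi_mat p n A = (\<lambda>i j. A (p - 1 - i) (n - 1 - j))"

definition centrosymmetric :: "nat \<Rightarrow> nat \<Rightarrow> mat \<Rightarrow> bool" where
  "centrosymmetric p n A \<longleftrightarrow> (\<forall>i<p. \<forall>j<n. A i j = pi_mat p n A i j)"

definition Gamma_pi :: "nat \<Rightarrow> nat \<Rightarrow> mat set" where
  "Gamma_pi p n = {A. stochastic p n A \<and> centrosymmetric p n A}"

definition lin_indep_mats :: "nat \<Rightarrow> nat \<Rightarrow> nat \<Rightarrow> (nat \<Rightarrow> mat) \<Rightarrow> bool" where
  "lin_indep_mats p n N B \<longleftrightarrow>
     (\<forall>c::nat \<Rightarrow> real. (\<forall>i<p. \<forall>j<n. (\<Sum>t<N. c t * B t i j) = 0) \<longrightarrow> (\<forall>t<N. c t = 0))"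

definition in_span_mats :: "nat \<Rightarrow> nat \<Rightarrow> nat \<Rightarrow> (nat \<Rightarrow> mat) \<Rightarrow> mat \<Rightarrow> bool" where
  "in_span_mats p n N B A \<longleftrightarrow>
     (\<exists>c::nat \<Rightarrow> real. \<forall>i<p. \<forall>j<n. A i j = (\<Sum>t<N. c t * B t i j))"

definition is_basis_mats :: "nat \<Rightarrow> nat \<Rightarrow> mat set \<Rightarrow> nat \<Rightarrow> (nat \<Rightarrow> mat) \<Rightarrow> bool" where
  "is_basis_mats p n S N B \<longleftrightarrow>
     (\<forall>t<N. B t \<in> S) \<and> lin_indep_mats p n N B \<and> (\<forall>A\<in>S. in_span_mats p n N B A)"

definition stack_pi :: "nat \<Rightarrow> nat \<Rightarrow> mat \<Rightarrow> mat" where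
  "stack_pi k n B = (\<lambda>i j. if i < k then B i j else pi_mat k n B (i - k) j)"

end

theory Submission
  imports Defs
begin

lemma sum_rev_n:
  fixes f :: "nat \<Rightarrow> real"
  shows "(\<Sum>j<n. f (n - 1 - j)) = (\<Sum>j<n. f j)"
proof -
  have "(\<Sum>j<n. f (n - 1 - j)) = (\<Sum>j\<in>(\<lambda>j. n - 1 - j) ` {..<n}. f j)"
    by (subst sum.reindex) (auto simp: inj_on_def)
  also have "(\<lambda>j. n - 1 - j) ` {..<n} = {..<n}"
  proof
    show "{..<n} \<subseteq> (\<lambda>j. n - 1 - j) ` {..<n}"
    proof
      fix x assume "x \<in> {..<n}"
      then show "x \<in> (\<lambda>j. n - 1 - j) ` {..<n}"
        by (intro image_eqI[of _ _ "n - 1 - x"]) auto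
    qed
  qed auto
  finally show ?thesis .
qed

lemma stack_mem:
  assumes "stochastic k n B"
  shows "stack_pi k n B \<in> Gamma_pi (2 * k) n"
proof -
  let ?A = "stack_pi k n B"
  have st: "stochastic (2*k) n ?A"
    unfolding stochastic_def
  proof (intro conjI allI impI)
    fix i j assume i: "i < 2*k" and j: "j < n"
    show "0 \<le> ?A i j"
    proof (cases "i < k")
      case True then show ?thesis using assms j by (simp add: stack_pi_def stochastic_def)
    next
      case False then show ?thesis using assms j i
        by (simp add: stack_pi_def stochastic_def pi_mat_def)
    qed
  next
    fix i assume i: "i < 2*k"
    show "(\<Sum>j<n. ?A i j) = 1"
    proof (cases "i < k")
      case True then show ?thesis using assms by (simp add: stack_pi_def stochastic_def)
    next
      case False
      then have "(\<Sum>j<n. ?A i j) = (\<Sum>j<n. B (k - 1 - (i - k)) (n - 1 - j))"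
        by (simp add: stack_pi_def pi_mat_def)
      also have "\<dots> = (\<Sum>j<n. B (k - 1 - (i - k)) j)"
        by (rule sum_rev_n)
      also have "\<dots> = 1" using assms False i by (simp add: stochastic_def)
      finally show ?thesis .
    qed
  qed
  have cs: "centrosymmetric (2*k) n ?A"
    unfolding centrosymmetric_def
  proof (intro allI impI)
    fix i j assume i: "i < 2*k" and j: "j < n"
    show "?A i j = pi_mat (2*k) n ?A i j"
    proof (cases "i < k")
      case True
      then have "\<not> (2*k - 1 - i < k)" "k - 1 - (2*k - 1 - i - k) = i" "n - 1 - (n - 1 - j) = j"
        using j by auto
      then show ?thesis using True by (simp add: stack_pi_def pi_mat_def)
    next
      case False
      then have "2*k - 1 - i < k" "k - 1 - (i - k) = 2*k - 1 - i" using i by auto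
      then show ?thesis using False by (simp add: stack_pi_def pi_mat_def)
    qed
  qed
  show ?thesis using st cs by (simp add: Gamma_pi_def)
qed

theorem mainTheorem9:
  fixes k n :: nat and B :: "nat \<Rightarrow> mat"
  assumes "0 < k" and "0 < n"
    and "is_basis_mats k n (Gamma k n) (k * (n - 1) + 1) B"
  shows "is_basis_mats (2 * k) n (Gamma_pi (2 * k) n) (k * (n - 1) + 1) (\<lambda>t. stack_pi k n (B t))"
proof -
  let ?N = "k * (n - 1) + 1"
  have mem: "\<forall>t<?N. B t \<in> Gamma k n" and li: "lin_indep_mats k n ?N B"
    and sp: "\<forall>A\<in>Gamma k n. in_span_mats k n ?N B A"
    using assms(3) by (auto simp: is_basis_mats_def)
  have m1: "\<forall>t<?N. stack_pi k n (B t) \<in> Gamma_pi (2 * k) n"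
    using mem stack_mem by (auto simp: Gamma_def)
  have m2: "lin_indep_mats (2*k) n ?N (\<lambda>t. stack_pi k n (B t))"
    unfolding lin_indep_mats_def
  proof (intro allI impI)
    fix c :: "nat \<Rightarrow> real" and t
    assume h: "\<forall>i<2*k. \<forall>j<n. (\<Sum>t<?N. c t * stack_pi k n (B t) i j) = 0" and t: "t < ?N"
    have z: "\<forall>i<k. \<forall>j<n. (\<Sum>t<?N. c t * B t i j) = 0"
    proof (intro allI impI)
      fix i j assume "i < k" "j < n"
      then show "(\<Sum>t<?N. c t * B t i j) = 0" using h[rule_format, of i j]
        by (simp add: stack_pi_def)
    qed
    show "c t = 0" using li[unfolded lin_indep_mats_def, rule_format, OF z[rule_format] t] .
  qed
  have m3: "\<forall>A\<in>Gamma_pi (2*k) n. in_span_mats (2*k) n ?N (\<lambda>t. stack_pi k n (B t)) A"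
  proof
    fix A assume A: "A \<in> Gamma_pi (2*k) n"
    have "A \<in> Gamma k n" using A by (auto simp: Gamma_def Gamma_pi_def stochastic_def)
    then have "in_span_mats k n ?N B A" using sp by blast
    then obtain c where c: "\<forall>i<k. \<forall>j<n. A i j = (\<Sum>t<?N. c t * B t i j)"
      unfolding in_span_mats_def by blast
    have cs: "\<forall>i<2*k. \<forall>j<n. A i j = A (2*k - 1 - i) (n - 1 - j)"
      using A unfolding Gamma_pi_def centrosymmetric_def pi_mat_def by blast
    show "in_span_mats (2*k) n ?N (\<lambda>t. stack_pi k n (B t)) A"
      unfolding in_span_mats_def
    proof (intro exI[of _ c] allI impI)
      fix i j assume i: "i < 2*k" and j: "j < n"
      show "A i j = (\<Sum>t<?N. c t * stack_pi k n (B t) i j)"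
      proof (cases "i < k")
        case True then show ?thesis using c j by (simp add: stack_pi_def)
      next
        case False
        then have e: "2*k - 1 - i < k" "k - 1 - (i - k) = 2*k - 1 - i" "n - 1 - j < n"
          using i j by auto
        have "A i j = A (2*k - 1 - i) (n - 1 - j)" by (rule cs[rule_format, OF i j])
        also have "\<dots> = (\<Sum>t<?N. c t * B t (2*k - 1 - i) (n - 1 - j))"
          by (rule c[rule_format, OF e(1) e(3)])
        finally show ?thesis using False e by (simp add: stack_pi_def pi_mat_def)
      qed
    qed
  qed
  show ?thesis using m1 m2 m3 by (simp add: is_basis_mats_def)
qed

end
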